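(* Let $\Sigma$ be a two-letter alphabet and $\Gamma$ a finite alphabet with at least two letters. There exists an infinite word $w\in\Sigma^{\mathbb{N}}$ with $\mathrm{ACE}_{\mathcal{I}}(w) = 1$.
   Context: $\mathrm{Fact}_n(w)$ is the set of length-$n$ factors of $w$. For a nonempty word $v$ and integer $p\ge0$, $v^{p/|v|}$ is the prefix of length $p$ of $vvv\cdots$. For a nonempty finite word $x$, $\mathrm{E}(x) = \sup\{ r \in \mathbb{Q} : x = v^r \text{ for some nonempty } v\}$. $\mathrm{ACE}(w) = \limsup_{n\to\infty}\sup\{\mathrm{E}(x) : x\in\mathrm{Fact}_n(w)\}$. $\mathcal{I}$ is the set of injective morphisms $\Sigma^*\to\Gamma^*$ and $\mathrm{ACE}_{\mathcal{I}}(w) = \sup\{\mathrm{ACE}(h(w)) : h\in\mathcal{I}\}$. *)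

theory Defs
  imports Complex_Main "HOL-Library.Extended_Real" "HOL-Library.Liminf_Limsup"
begin

text \<open>v^(p/|v|): the prefix of length p of v v v ...\<close>
definition frac_pow :: "'a list \<Rightarrow> nat \<Rightarrow> 'a list" where
  "frac_pow v p = take p (concat (replicate p v))"

text \<open>E(x) = sup { r in Q : x = v^r for some nonempty v }; x = v^r forces r = |x|/|v|.\<close>
definition Exp :: "'a list \<Rightarrow> real" where
  "Exp x = Sup {real (length x) / real (length v) | v. v \<noteq> [] \<and> x = frac_pow v (length x)}"

definition Fact :: "nat \<Rightarrow> (nat \<Rightarrow> 'a) \<Rightarrow> 'a list set" where
  "Fact n w = {map w [i..<i+n] | i. True}"

definition ACE :: "(nat \<Rightarrow> 'a) \<Rightarrow> ereal" where
  "ACE w = limsup (\<lambda>n. SUP x \<in> Fact n w. ereal (Exp x))"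

definition morph :: "('a \<Rightarrow> 'b list) \<Rightarrow> 'a list \<Rightarrow> 'b list" where
  "morph h u = concat (map h u)"

text \<open>Image of an infinite word under a (non-erasing) morphism: letter k of h(w).
  For injective morphisms every letter image is nonempty, so this is well defined.\<close>
definition morph_inf :: "('a \<Rightarrow> 'b list) \<Rightarrow> (nat \<Rightarrow> 'a) \<Rightarrow> nat \<Rightarrow> 'b" where
  "morph_inf h w k = morph h (map w [0..<Suc k]) ! k"

definition ACE_inj :: "'b itself \<Rightarrow> (nat \<Rightarrow> 'a) \<Rightarrow> ereal" where
  "ACE_inj _ w = (SUP h \<in> {h :: 'a \<Rightarrow> 'b list. inj (morph h)}. ACE (morph_inf h w))"

end

theory Submission
  imports Defs "HOL-Library.Sublist"
begin


lemma morph_append[simp]: "morph h (u @ v) = morph h u @ morph h v"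
  by (simp add: morph_def)
lemma morph_Nil[simp]: "morph h [] = []" by (simp add: morph_def)
lemma morph_Cons[simp]: "morph h (c # u) = h c @ morph h u" by (simp add: morph_def)

lemma inj_morph_nonempty: "inj (morph h) \<Longrightarrow> h c \<noteq> []"
proof
  assume "inj (morph h)" "h c = []"
  then have "morph h [c] = morph h []" by simp
  with \<open>inj (morph h)\<close> have "[c] = []" by (rule injD)
  then show False by simp
qed

lemma length_morph_ge: "(\<forall>c. h c \<noteq> []) \<Longrightarrow> length u \<le> length (morph h u)"
proof (induction u)
  case (Cons c u) then show ?case
  proof -
    have "h c \<noteq> []" using Cons.prems by blast
    then have "1 \<le> length (h c)" by (simp add: Suc_leI)
    then show ?thesis using Cons by simp
  qed
qed simp

lemma length_morph_le: "(\<forall>c. length (h c) \<le> M) \<Longrightarrow> length (morph h u) \<le> M * length u"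
  by (induction u) (auto simp: add_le_mono)

lemma morph_take_prefix: "prefix (morph h (take s u)) (morph h u)"
  by (metis append_take_drop_id morph_append prefix_def)

lemma morph_drop: "morph h (drop s u) = drop (length (morph h (take s u))) (morph h u)"
  by (metis append_eq_conv_conj append_take_drop_id morph_append)

lemma morph_take_Suc: "s < length u \<Longrightarrow> morph h (take (Suc s) u) = morph h (take s u) @ h (u ! s)"
  by (simp add: take_Suc_conv_app_nth)

lemma concat_replicate_nth:
  "j < k * length v \<Longrightarrow> concat (replicate k v) ! j = v ! (j mod length v)"
proof (induction k arbitrary: j)
  case (Suc k)
  show ?case
  proof (cases "j < length v")
    case True then show ?thesis by (simp add: nth_append)
  next
    case False
    then have "j - length v < k * length v" using Suc.prems by auto
    then show ?thesis using False Suc.IH by (simp add: nth_append le_mod_geq)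
  qed
qed simp

lemma frac_pow_nth:
  assumes "v \<noteq> []" "j < p"
  shows "frac_pow v p ! j = v ! (j mod length v)"
proof -
  have "p \<le> p * length v" using assms by (simp add: Suc_leI)
  then have "j < p * length v" using assms by linarith
  then show ?thesis using assms unfolding frac_pow_def by (simp add: concat_replicate_nth)
qed

lemma length_frac_pow: "v \<noteq> [] \<Longrightarrow> length (frac_pow v p) = p"
proof -
  assume "v \<noteq> []"
  then have "p \<le> p * length v" by (simp add: Suc_leI)
  moreover have "length (concat (replicate p v)) = p * length v" by (simp add: length_concat sum_list_replicate)
  ultimately show ?thesis unfolding frac_pow_def by simp
qed

lemma frac_pow_self: "x \<noteq> [] \<Longrightarrow> frac_pow x (length x) = x"
  by (rule nth_equalityI) (auto simp: length_frac_pow frac_pow_nth)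

lemma frac_pow_period:
  assumes "v \<noteq> []" "x = frac_pow v (length x)" "j + length v < length x"
  shows "x ! j = x ! (j + length v)"
  using assms frac_pow_nth[of v j "length x"] frac_pow_nth[of v "j + length v" "length x"]
  by (metis add_lessD1 mod_add_self2)

lemma Exp_set_bdd: fixes x :: "'a list" shows "bdd_above {real (length x) / real (length v) | v. v \<noteq> [] \<and> x = frac_pow v (length x)}"
proof (rule bdd_aboveI[where M = "real (length x)"])
  fix r assume "r \<in> {real (length x) / real (length v) | v. v \<noteq> [] \<and> x = frac_pow v (length x)}"
  then obtain v :: "'a list" where "v \<noteq> []" "r = real (length x) / real (length v)" by auto
  then show "r \<le> real (length x)"
  proof -
    have "real (length v) \<ge> 1" using \<open>v \<noteq> []\<close> by (simp add: Suc_leI)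
    then show ?thesis using \<open>r = _\<close> by (simp add: divide_le_eq mult_le_cancel_left1)
  qed
qed

lemma Exp_ge1: "x \<noteq> [] \<Longrightarrow> 1 \<le> Exp x"
  unfolding Exp_def
  by (rule cSup_upper2[OF _ _ Exp_set_bdd, where x = 1]) (auto intro!: exI[where x = x] simp: frac_pow_self)

lemma Exp_le:
  assumes "x \<noteq> []"
    and "\<And>v. v \<noteq> [] \<Longrightarrow> x = frac_pow v (length x) \<Longrightarrow> real (length x) / real (length v) \<le> r"
  shows "Exp x \<le> r"
  unfolding Exp_def
  by (rule cSup_least) (use assms frac_pow_self[OF assms(1)] in auto)



lemma Fact_nth: "x \<in> Fact n z \<Longrightarrow> \<exists>i. length x = n \<and> (\<forall>j<n. x ! j = z (i + j))"
  unfolding Fact_def by auto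

lemma ACE_ge1: "1 \<le> ACE z"
  unfolding ACE_def
proof (rule le_Limsup)
  show "(sequentially :: nat filter) \<noteq> bot" by simp
  show "\<forall>\<^sub>F n in sequentially. 1 \<le> (SUP x\<in>Fact n z. ereal (Exp x))"
    unfolding eventually_sequentially
  proof (intro exI[where x = 1] allI impI)
    fix n :: nat assume "1 \<le> n"
    let ?x = "map z [0..<0+n]"
    have "?x \<in> Fact n z" unfolding Fact_def by blast
    moreover have "?x \<noteq> []" using \<open>1 \<le> n\<close> by simp
    ultimately show "1 \<le> (SUP x\<in>Fact n z. ereal (Exp x))"
      by (intro SUP_upper2[of ?x]) (auto simp: Exp_ge1)
  qed
qed

lemma arith_core:
  fixes e Ln q n N :: real
  assumes "0 < e" "n = Ln + q" "0 \<le> Ln" "1 \<le> q" "N + N / e + 1 / e + 1 / e^2 \<le> n" "0 \<le> N"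
    and "Ln < N \<or> Ln^2 < q"
  shows "Ln \<le> e * q"
proof (cases "Ln < N")
  case True
  have "0 \<le> 1/e" "0 \<le> 1/e^2" using assms(1) by simp_all
  then have "N / e \<le> n - N" using assms(5) by linarith
  then have "N \<le> (n - N) * e" using assms(1) by (simp add: divide_le_eq)
  then have "N \<le> e * (n - N)" by (simp add: mult.commute)
  also have "\<dots> \<le> e * q" using True assms by (intro mult_left_mono) auto
  finally show ?thesis using True by simp
next
  case False
  then have sq: "Ln^2 < q" using assms by blast
  show ?thesis
  proof (cases "1 \<le> Ln * e")
    case True
    have "1 * Ln \<le> Ln * e * Ln" using mult_right_mono[OF True assms(3)] .
    then have "Ln \<le> Ln * e * Ln" by simp
    also have "\<dots> = e * Ln^2" by (simp add: power2_eq_square)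
    also have "\<dots> \<le> e * q" using sq assms(1) by simp
    finally show ?thesis .
  next
    case False
    then have L1: "Ln < 1 / e" using assms(1) by (simp add: less_divide_eq)
    have "0 \<le> N/e" using assms(1,6) by simp
    then have "1 / e^2 \<le> n - 1/e" using assms(5,6) by linarith
    also have "\<dots> \<le> q" using L1 assms by simp
    finally have "e * (1 / e^2) \<le> e * q" using assms(1) by (intro mult_left_mono) auto
    moreover have "e * (1 / e^2) = 1 / e" by (simp add: power2_eq_square)
    ultimately show ?thesis using L1 by simp
  qed
qed

lemma ACE_le1:
  assumes P: "\<forall>i p L. N \<le> L \<longrightarrow> 0 < p \<longrightarrow> p \<le> L^2 \<longrightarrow> \<not> (\<forall>j<L. z (i+j) = z (i+p+j))"
  shows "ACE z \<le> 1"
proof (rule ereal_le_epsilon2)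
  fix e :: real assume e: "0 < e"
  define n0 :: nat where "n0 = nat \<lceil>real N + real N / e + 1 / e + 1 / e^2\<rceil> + 1"
  have n0: "real N + real N / e + 1 / e + 1 / e^2 \<le> real n0" unfolding n0_def by linarith
  have "ACE z \<le> ereal (1 + e)"
    unfolding ACE_def
  proof (rule Limsup_bounded, unfold eventually_sequentially, intro exI[where x = n0] allI impI)
    fix n assume "n0 \<le> n"
    then have nb: "real N + real N / e + 1 / e + 1 / e^2 \<le> real n" using n0 by linarith
    have "n \<ge> 1" using \<open>n0 \<le> n\<close> unfolding n0_def by simp
    show "(SUP x\<in>Fact n z. ereal (Exp x)) \<le> ereal (1 + e)"
    proof (rule SUP_least)
      fix x assume "x \<in> Fact n z"
      then obtain i where xl: "length x = n" and xi: "\<forall>j<n. x ! j = z (i + j)" using Fact_nth by blast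
      have "x \<noteq> []" using xl \<open>n \<ge> 1\<close> by auto
      have "Exp x \<le> 1 + e"
      proof (rule Exp_le[OF \<open>x \<noteq> []\<close>])
        fix v assume v: "v \<noteq> []" "x = frac_pow v (length x)"
        define q where "q = length v"
        have q1: "1 \<le> q" using v(1) unfolding q_def by (simp add: Suc_leI)
        show "real (length x) / real (length v) \<le> 1 + e"
        proof (cases "n \<le> q")
          case True
          then have "real n / real q \<le> 1" using q1 by simp
          then show ?thesis using xl q_def e by simp
        next
          case False
          define L where "L = n - q"
          have nLq: "n = L + q" using False unfolding L_def by simp
          have per: "\<forall>j<L. z (i+j) = z (i+q+j)"
          proof (intro allI impI)
            fix j assume "j < L"
            then have "j + q < length x" using nLq xl by simp
            then have "x ! j = x ! (j + q)" using frac_pow_period[OF v(1) v(2)] q_def by simp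
            moreover have "x ! j = z (i + j)" using xi \<open>j + q < length x\<close> xl by simp
            moreover have "x ! (j + q) = z (i + (j + q))" using xi \<open>j + q < length x\<close> xl by simp
            ultimately show "z (i+j) = z (i+q+j)" by (simp add: ac_simps)
          qed
          then have "\<not> (N \<le> L \<and> q \<le> L^2)" using P q1 by (metis less_le_trans zero_less_one)
          then have "L < N \<or> L^2 < q" by auto
          then have "real L < real N \<or> real (L^2) < real q" by (simp only: of_nat_less_iff)
          then have "real L < real N \<or> (real L)^2 < real q" by simp
          then have "real L \<le> e * real q"
            using arith_core[OF e, of "real n" "real L" "real q" "real N"] nLq q1 nb by simp
          then have "real n / real q \<le> 1 + e" using q1 nLq by (simp add: divide_le_eq algebra_simps)
          then show ?thesis using xl q_def by simp
        qed
      qed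
      then show "ereal (Exp x) \<le> ereal (1 + e)" by simp
    qed
  qed
  then show "ACE z \<le> 1 + ereal e" by (simp add: add.commute)
qed



section \<open>Tail estimate\<close>

lemma geom_le:
  fixes t :: real assumes "0 \<le> t" "t < 1"
  shows "(\<Sum>d=D..K. t^d) \<le> 1 / (1 - t)"
proof -
  have "(\<Sum>d=D..K. t^d) \<le> (\<Sum>d<Suc K. t^d)"
    by (rule sum_mono2) (use assms in auto)
  also have "\<dots> = (if t = 1 then of_nat (Suc K) else (1 - t^Suc K) / (1 - t))" by (rule sum_gp_strict)
  also have "\<dots> = (1 - t^Suc K) / (1 - t)" using assms by simp
  also have "\<dots> \<le> 1 / (1 - t)" using assms by (intro divide_right_mono) auto
  finally show ?thesis .
qed

lemma g_lim: "(\<lambda>d. (real d + 1) * (19/20::real)^d) \<longlonglongrightarrow> 0"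
proof -
  have "(\<lambda>d. real d * (19/20::real)^d) \<longlonglongrightarrow> 0"
    using powser_times_n_limit_0[of "19/20::real"] by simp
  moreover have "(\<lambda>d. (19/20::real)^d) \<longlonglongrightarrow> 0" by (rule LIMSEQ_power_zero) simp
  ultimately have "(\<lambda>d. real d * (19/20::real)^d + (19/20::real)^d) \<longlonglongrightarrow> 0 + 0"
    by (rule tendsto_add)
  then show ?thesis by (simp add: algebra_simps)
qed

lemma tail_small:
  fixes A \<epsilon> :: real
  assumes A: "0 \<le> A" and e: "0 < \<epsilon>"
  shows "\<exists>D. \<forall>K. (\<Sum>d=D..K. A * real (M*(d+2)+1)^4 * (2/3)^d) \<le> \<epsilon>"
proof -
  define t :: real where "t = (2/3) / (19/20)^4"
  have t0: "0 \<le> t" and t1: "t < 1" unfolding t_def by (simp_all add: eval_nat_numeral)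
  define c :: real where "c = A * real (2*M+1)^4"
  have c0: "0 \<le> c" unfolding c_def using A by simp
  define \<delta> where "\<delta> = \<epsilon> * (1 - t) / (c + 1)"
  have \<delta>0: "0 < \<delta>" unfolding \<delta>_def using e t1 c0 by simp
  have "(\<lambda>d. ((real d + 1) * (19/20::real)^d)^4) \<longlonglongrightarrow> 0^4"
    by (intro tendsto_power g_lim)
  then have "\<forall>\<^sub>F d in sequentially. ((real d + 1) * (19/20::real)^d)^4 < \<delta>"
    using \<delta>0 by (intro order_tendstoD(2)) simp_all
  then obtain D where D: "\<And>d. d \<ge> D \<Longrightarrow> ((real d + 1) * (19/20::real)^d)^4 < \<delta>"
    unfolding eventually_sequentially by blast
  have termb: "A * real (M*(d+2)+1)^4 * (2/3)^d \<le> c * \<delta> * t^d" if "d \<ge> D" for d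
  proof -
    have e1: "real (M*(d+2)+1) = real M * real d + 2 * real M + 1" by (simp add: algebra_simps)
    have e2: "real (2*M+1) * (real d + 1) = 2 * (real M * real d) + real d + 2 * real M + 1"
      by (simp add: algebra_simps)
    have md: "0 \<le> real M * real d" by simp
    have "real (M*(d+2)+1) \<le> real (2*M+1) * (real d + 1)" unfolding e1 e2 using md by linarith
    then have "real (M*(d+2)+1)^4 \<le> (real (2*M+1) * (real d + 1))^4"
      by (intro power_mono) auto
    then have "A * real (M*(d+2)+1)^4 * (2/3)^d \<le> A * (real (2*M+1) * (real d + 1))^4 * (2/3)^d"
      using A by (intro mult_right_mono mult_left_mono) auto
    also have "\<dots> = c * ((real d + 1) * (19/20)^d)^4 * t^d"
    proof -
      have "(2/3::real)^d = ((19/20)^4 * t)^d" unfolding t_def by simp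
      also have "\<dots> = ((19/20)^4)^d * t^d" by (simp only: power_mult_distrib)
      also have "((19/20::real)^4)^d = ((19/20)^d)^4" by (metis power_mult mult.commute)
      finally show ?thesis unfolding c_def by (simp add: power_mult_distrib)
    qed
    also have "\<dots> \<le> c * \<delta> * t^d"
      using D[OF that] c0 t0 by (intro mult_right_mono mult_left_mono) auto
    finally show ?thesis .
  qed
  show ?thesis
  proof (intro exI allI)
    fix K
    have "(\<Sum>d=D..K. A * real (M*(d+2)+1)^4 * (2/3)^d) \<le> (\<Sum>d=D..K. c * \<delta> * t^d)"
      by (rule sum_mono) (use termb in auto)
    also have "\<dots> = c * \<delta> * (\<Sum>d=D..K. t^d)" by (simp add: sum_distrib_left)
    also have "\<dots> \<le> c * \<delta> * (1 / (1 - t))"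
      using geom_le[OF t0 t1] c0 \<delta>0 by (intro mult_left_mono) auto
    also have "\<dots> = \<epsilon> * (c / (c + 1))"
    proof -
      have n1: "1 - t \<noteq> 0" using t1 by simp
      have n2: "c + 1 \<noteq> 0" using c0 by simp
      have "c * \<delta> * (1 / (1 - t)) = (\<epsilon> * c / (c + 1)) * ((1 - t) / (1 - t))"
        unfolding \<delta>_def by (simp only: divide_inverse ac_simps mult_1_left)
      also have "\<dots> = \<epsilon> * c / (c + 1)" using n1 by simp
      finally show ?thesis by simp
    qed
    also have "\<dots> \<le> \<epsilon>"
    proof -
      have "c / (c + 1) \<le> 1" using c0 by simp
      then have "\<epsilon> * (c / (c + 1)) \<le> \<epsilon> * 1" using e by (intro mult_left_mono) auto
      then show ?thesis by (simp only: mult_1_right)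
    qed
    finally show "(\<Sum>d=D..K. A * real (M*(d+2)+1)^4 * (2/3)^d) \<le> \<epsilon>" .
  qed
qed



definition rep :: "'b list \<Rightarrow> nat \<Rightarrow> nat \<Rightarrow> nat \<Rightarrow> bool" where
  "rep z i p L \<longleftrightarrow> 0 < p \<and> i + p + L \<le> length z \<and> (\<forall>j<L. z ! (i+j) = z ! (i+p+j))"

function per :: "'b list \<Rightarrow> nat \<Rightarrow> nat \<Rightarrow> 'b" where
  "per z0 p k = (if k < length z0 \<or> p = 0 \<or> k < p then z0 ! k else per z0 p (k - p))"
  by pat_completeness auto
termination by (relation "measure (\<lambda>(z0,p,k). k)") auto
declare per.simps[simp del]

definition ext :: "'b list \<Rightarrow> nat \<Rightarrow> nat \<Rightarrow> 'b list" where
  "ext z0 p l = map (\<lambda>m. per z0 p (length z0 + m)) [0..<l]"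

lemma length_ext[simp]: "length (ext z0 p l) = l" by (simp add: ext_def)

lemma per_rep:
  assumes r: "rep z i p L" and b1: "i + p \<le> b" and b2: "b \<le> length z"
  shows "k < i + p + L \<Longrightarrow> z ! k = per (take b z) p k"
proof (induction k rule: less_induct)
  case (less k)
  show ?case
  proof (cases "k < b")
    case True
    then show ?thesis using b2 by (simp add: per.simps)
  next
    case False
    have p0: "0 < p" using r unfolding rep_def by simp
    have kp: "\<not> k < p" using False b1 by simp
    have "per (take b z) p k = per (take b z) p (k - p)"
      using False b2 p0 kp by (subst per.simps) simp
    moreover have "z ! (k - p) = per (take b z) p (k - p)"
      using less.IH[of "k - p"] p0 kp less.prems by simp
    moreover have "z ! (k - p) = z ! k"
    proof -
      define j where "j = k - p - i"
      have "j < L" using less.prems False b1 unfolding j_def by simp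
      then have "z ! (i + j) = z ! (i + p + j)" using r unfolding rep_def by blast
      moreover have "i + j = k - p" "i + p + j = k" using False b1 unfolding j_def by simp_all
      ultimately show ?thesis by simp
    qed
    ultimately show ?thesis by simp
  qed
qed

lemma ext_prefix:
  assumes r: "rep z i p L" and b1: "i + p \<le> b" and b2: "b \<le> length z" and bl: "b + l \<le> i + p + L"
  shows "prefix (ext (take b z) p l) (drop b z)"
proof -
  have len: "i + p + L \<le> length z" using r unfolding rep_def by simp
  have "ext (take b z) p l = take l (drop b z)"
  proof (rule nth_equalityI)
    show "length (ext (take b z) p l) = length (take l (drop b z))" using bl len by simp
  next
    fix m assume "m < length (ext (take b z) p l)"
    then have m: "m < l" by simp
    have "ext (take b z) p l ! m = per (take b z) p (b + m)"
      using m b2 by (simp add: ext_def)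
    also have "\<dots> = z ! (b + m)" using per_rep[OF r b1 b2, of "b + m"] m bl by simp
    also have "\<dots> = take l (drop b z) ! m" using m bl len b2 by simp
    finally show "ext (take b z) p l ! m = take l (drop b z) ! m" .
  qed
  then show ?thesis by (simp add: take_is_prefix)
qed

lemma prefix_take_eq: "prefix a u \<Longrightarrow> a = take (length a) u"
  by (metis append_eq_conv_conj prefix_def)

section \<open>Counting words with a prescribed image prefix\<close>

lemma finite_lists_less: "finite (UNIV :: 'a set) \<Longrightarrow> finite {xs :: 'a list. length xs < n}"
proof -
  assume f: "finite (UNIV :: 'a set)"
  have "{xs :: 'a list. length xs < n} \<subseteq> {xs. set xs \<subseteq> UNIV \<and> length xs \<le> n}" by auto
  then show ?thesis using finite_lists_length_le[OF f, of n] finite_subset by blast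
qed

lemma finite_lists_eq: "finite (UNIV :: 'a set) \<Longrightarrow> finite {xs :: 'a list. length xs = n}"
proof -
  assume f: "finite (UNIV :: 'a set)"
  have "{xs :: 'a list. length xs = n} \<subseteq> {xs. set xs \<subseteq> UNIV \<and> length xs = n}" by auto
  then show ?thesis using finite_lists_length_eq[OF f, of n] finite_subset by blast
qed

lemma card_Xs:
  fixes h :: "'a \<Rightarrow> 'b list"
  assumes inj: "inj (morph h)" and bnd: "\<forall>c. length (h c) \<le> M" and fin: "finite (UNIV :: 'a set)"
  shows "card {x :: 'a list. length x = t \<and> prefix u (morph h x) \<and> length (morph h x) < length u + K}
         \<le> (length u + 1) * card {xs :: 'a list. length xs < K + M}"
proof -
  let ?S = "{x :: 'a list. length x = t \<and> prefix u (morph h x) \<and> length (morph h x) < length u + K}"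
  let ?T = "{xs :: 'a list. length xs < K + M}"
  have ne: "\<forall>c. h c \<noteq> []" using inj_morph_nonempty[OF inj] by blast
  define P where "P x j \<longleftrightarrow> j \<le> length x \<and> length (morph h (take j x)) \<le> length u" for x :: "'a list" and j
  define kk where "kk x = (GREATEST j. P x j)" for x
  have P0: "P x 0" for x unfolding P_def by simp
  have Pk: "P x (kk x)" for x unfolding kk_def
    by (rule GreatestI_nat[where k = 0 and b = "length x"]) (auto simp: P_def)
  have Pmax: "P x j \<Longrightarrow> j \<le> kk x" for x j unfolding kk_def
    by (rule Greatest_le_nat[where b = "length x"]) (auto simp: P_def)
  define f where "f x = (length (morph h (take (kk x) x)), drop (kk x) x)" for x
  have pre: "prefix (morph h (take (kk x) x)) u" if "x \<in> ?S" for x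
  proof -
    have "prefix (morph h (take (kk x) x)) (morph h x)" by (rule morph_take_prefix)
    moreover have "prefix u (morph h x)" using that by simp
    moreover have "length (morph h (take (kk x) x)) \<le> length u" using Pk[of x] unfolding P_def by simp
    ultimately show ?thesis by (rule prefix_length_prefix)
  qed
  have M1: "1 \<le> M"
  proof -
    obtain c :: 'a where True by simp
    have "1 \<le> length (h c)" using ne by (simp add: Suc_le_eq)
    then show ?thesis using bnd by (meson order_trans)
  qed
  have dropT: "drop (kk x) x \<in> ?T" if "x \<in> ?S" for x
  proof (cases "kk x = length x")
    case True then show ?thesis using M1 by simp
  next
    case False
    then have k: "kk x < length x" using Pk[of x] unfolding P_def by simp
    then have "\<not> P x (Suc (kk x))" using Pmax[of x "Suc (kk x)"] by auto
    then have "length u < length (morph h (take (Suc (kk x)) x))" using k unfolding P_def by simp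
    also have "\<dots> = length (morph h (take (kk x) x)) + length (h (x ! kk x))"
      using morph_take_Suc[OF k, of h] by simp
    also have "\<dots> \<le> length (morph h (take (kk x) x)) + M" using bnd by simp
    finally have a: "length u < length (morph h (take (kk x) x)) + M" .
    have "morph h x = morph h (take (kk x) x) @ morph h (drop (kk x) x)"
      by (metis append_take_drop_id morph_append)
    then have "length (morph h x) = length (morph h (take (kk x) x)) + length (morph h (drop (kk x) x))"
      by (metis length_append)
    moreover have "length (morph h x) < length u + K" using that by simp
    ultimately have "length (morph h (drop (kk x) x)) < K + M" using a by linarith
    moreover have "length (drop (kk x) x) \<le> length (morph h (drop (kk x) x))"
      by (rule length_morph_ge[OF ne])
    ultimately show ?thesis by simp
  qed
  have "inj_on f ?S"
  proof (rule inj_onI)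
    fix x y assume x: "x \<in> ?S" and y: "y \<in> ?S" and fxy: "f x = f y"
    then have l: "length (morph h (take (kk x) x)) = length (morph h (take (kk y) y))"
      and d: "drop (kk x) x = drop (kk y) y" unfolding f_def by simp_all
    have "morph h (take (kk x) x) = take (length (morph h (take (kk x) x))) u"
      using prefix_take_eq[OF pre[OF x]] .
    also have "\<dots> = morph h (take (kk y) y)"
      using prefix_take_eq[OF pre[OF y]] l by simp
    finally have "take (kk x) x = take (kk y) y" using inj by (simp add: inj_eq)
    then show "x = y" using d by (metis append_take_drop_id)
  qed
  moreover have "f ` ?S \<subseteq> {..length u} \<times> ?T"
  proof
    fix a assume "a \<in> f ` ?S"
    then obtain x where x: "x \<in> ?S" and a: "a = f x" by blast
    have "length (morph h (take (kk x) x)) \<le> length u" using Pk[of x] unfolding P_def by simp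
    then show "a \<in> {..length u} \<times> ?T" using a dropT[OF x] unfolding f_def by simp
  qed
  moreover have "finite ({..length u} \<times> ?T)" using finite_lists_less[OF fin] by simp
  ultimately have "card ?S \<le> card ({..length u} \<times> ?T)" by (rule card_inj_on_le)
  also have "\<dots> = (length u + 1) * card ?T" by (simp add: card_cartesian_product)
  finally show ?thesis .
qed



definition HS :: "nat \<Rightarrow> ('a \<Rightarrow> 'b list) set" where
  "HS M = {h. inj (morph h) \<and> (\<forall>c. length (h c) \<le> M)}"

definition Qc :: "'a itself \<Rightarrow> nat \<Rightarrow> nat" where
  "Qc A M = card {xs :: 'a list. length xs < 3 * M}"

definition Tm :: "'a itself \<Rightarrow> 'b itself \<Rightarrow> nat \<Rightarrow> nat \<Rightarrow> real" where
  "Tm A B M d = real (card (HS M :: ('a \<Rightarrow> 'b list) set)) * real (Qc A M) * real (M * (d + 2) + 1) ^ 4 * (2/3) ^ d"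

definition Dsel :: "'a itself \<Rightarrow> 'b itself \<Rightarrow> nat \<Rightarrow> nat" where
  "Dsel A B M = (SOME D. \<forall>K. (\<Sum>d=D..K. Tm A B M d) \<le> 1 / (4 * 2^M))"

definition Nf :: "'a itself \<Rightarrow> 'b itself \<Rightarrow> nat \<Rightarrow> nat" where
  "Nf A B M = M * (Dsel A B M + 2) + M * M + 1"

definition good :: "'b itself \<Rightarrow> 'a list \<Rightarrow> bool" where
  "good B v \<longleftrightarrow> (\<forall>M (h :: 'a \<Rightarrow> 'b list) i p L. h \<in> HS M \<longrightarrow> Nf TYPE('a) B M \<le> L \<longrightarrow> p \<le> L^2
      \<longrightarrow> \<not> rep (morph h v) i p L)"

definition Good :: "'b itself \<Rightarrow> nat \<Rightarrow> 'a list set" where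
  "Good B n = {v. length v = n \<and> good B v}"

lemma Dsel_prop: "(\<Sum>d=Dsel A B M..K. Tm A B M d) \<le> 1 / (4 * 2^M)"
proof -
  have "\<exists>D. \<forall>K. (\<Sum>d=D..K. Tm A B M d) \<le> 1 / (4 * 2^M)"
    unfolding Tm_def
    using tail_small[of "real (card (HS M :: ('a \<Rightarrow> 'b list) set)) * real (Qc A M)" "1 / (4 * 2^M)" M]
    by (simp add: mult.assoc)
  then show ?thesis unfolding Dsel_def by (rule someI_ex[where P = "\<lambda>D. \<forall>K. (\<Sum>d=D..K. Tm A B M d) \<le> 1 / (4 * 2^M)", THEN spec])
qed

lemma rep_prefix: "rep z i p L \<Longrightarrow> rep (z @ y) i p L"
  unfolding rep_def by (auto simp: nth_append)

lemma rep_prefix_rev: "rep (z @ y) i p L \<Longrightarrow> i + p + L \<le> length z \<Longrightarrow> rep z i p L"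
  unfolding rep_def by (auto simp: nth_append)

lemma good_prefix: "good B (v @ u) \<Longrightarrow> good B v"
  unfolding good_def using rep_prefix by (metis morph_append)

lemma good_take: "good B v \<Longrightarrow> good B (take s v)"
  by (metis append_take_drop_id good_prefix)

lemma good_Nil: "good B []"
  unfolding good_def rep_def by auto

lemma finite_HS:
  assumes fa: "finite (UNIV :: 'a set)" and fb: "finite (UNIV :: 'b set)"
  shows "finite (HS M :: ('a \<Rightarrow> 'b list) set)"
proof -
  obtain xs :: "'a list" where xs: "set xs = UNIV" using finite_list[OF fa] by blast
  let ?g = "\<lambda>h :: 'a \<Rightarrow> 'b list. map h xs"
  have "inj_on ?g (HS M)"
  proof (rule inj_onI)
    fix h1 h2 :: "'a \<Rightarrow> 'b list" assume "map h1 xs = map h2 xs"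
    then show "h1 = h2" using xs by (metis ext UNIV_I map_eq_conv)
  qed
  moreover have "?g ` HS M \<subseteq> {ys. set ys \<subseteq> {zs. set zs \<subseteq> UNIV \<and> length zs \<le> M} \<and> length ys = length xs}"
    unfolding HS_def by auto
  moreover have "finite {ys. set ys \<subseteq> {zs :: 'b list. set zs \<subseteq> UNIV \<and> length zs \<le> M} \<and> length ys = length xs}"
    by (intro finite_lists_length_eq finite_lists_length_le fb)
  ultimately show ?thesis by (meson finite_imageD finite_subset)
qed

lemma finite_Good: "finite (UNIV :: 'a set) \<Longrightarrow> finite (Good B n :: 'a list set)"
  unfolding Good_def by (rule finite_subset[OF _ finite_lists_eq[of n]]) auto



definition Xs :: "('a \<Rightarrow> 'b list) \<Rightarrow> 'b list \<Rightarrow> nat \<Rightarrow> nat \<Rightarrow> 'a list set" where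
  "Xs h u K t = {x. length x = t \<and> prefix u (morph h x) \<and> length (morph h x) < length u + K}"

definition Img :: "'b itself \<Rightarrow> nat \<Rightarrow> nat \<Rightarrow> ('a \<Rightarrow> 'b list) \<Rightarrow> nat \<Rightarrow> nat \<Rightarrow> nat \<Rightarrow> 'a list set" where
  "Img B n M h s L p = (\<Union>y\<in>Good B s. (\<lambda>x. y @ x) ` Xs h (ext (morph h y) p (L - M)) (2*M) (n+1-s))"

lemma bad_decomp:
  fixes v :: "'a list" and B :: "'b itself"
  assumes v: "v \<in> Good B n" and nb: "\<not> good B (v @ [c])"
  shows "\<exists>M\<in>{1..n}. \<exists>h\<in>HS M. \<exists>d\<in>{Dsel TYPE('a) B M..n}. \<exists>L\<in>{..M*(d+2)}. \<exists>p\<in>{1..L^2}.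
           v @ [c] \<in> Img B n M h (n-d) L p"
proof -
  from nb obtain M and h :: "'a \<Rightarrow> 'b list" and i p L where
    hM: "h \<in> HS M" and NL: "Nf TYPE('a) B M \<le> L" and pL: "p \<le> L^2" and r0: "rep (morph h (v @ [c])) i p L"
    unfolding good_def by blast
  have lv: "length v = n" and gv: "good B v" using v unfolding Good_def by auto
  have inj: "inj (morph h)" and bnd: "\<forall>c. length (h c) \<le> M" using hM unfolding HS_def by auto
  have ne: "\<forall>c. h c \<noteq> []" using inj_morph_nonempty[OF inj] by blast
  have M1: "1 \<le> M"
  proof -
    have "1 \<le> length (h c)" using ne by (simp add: Suc_le_eq)
    then show ?thesis using bnd by (meson order_trans)
  qed
  define V where "V = v @ [c]"
  define z where "z = morph h V"
  have r: "rep z i p L" using r0 unfolding z_def V_def .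
  have p0: "0 < p" and rl: "i + p + L \<le> length z" using r unfolding rep_def by auto
  have lz: "length z = length (morph h v) + length (h c)" unfolding z_def V_def by simp
  have lzM: "length z \<le> length (morph h v) + M" using lz bnd by simp
  have lV: "length V = n + 1" unfolding V_def using lv by simp
  have lzn: "length z \<le> M * (n+1)" using length_morph_le[OF bnd, of V] lV unfolding z_def by simp
  have NfM: "M * (Dsel TYPE('a) B M + 2) + M * M + 1 \<le> L" using NL unfolding Nf_def .
  have "M * M < M * (n+1)" using NfM rl lzn by linarith
  then have "M < n + 1" by (simp only: mult_less_cancel1)
  then have Mn: "M \<le> n" by simp
  have "M \<le> M * M" using M1 by simp
  then have LM: "M < L" using NfM by linarith
  have nr: "\<not> rep (morph h v) i p L" using gv hM NL pL unfolding good_def by blast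
  have big: "length (morph h v) < i + p + L"
  proof (rule ccontr)
    assume "\<not> length (morph h v) < i + p + L"
    then have "i + p + L \<le> length (morph h v)" by simp
    moreover have "rep (morph h v @ h c) i p L" using r unfolding z_def V_def by simp
    ultimately have "rep (morph h v) i p L" by (rule rep_prefix_rev[rotated])
    with nr show False by simp
  qed
  have ipB: "i + p < length (morph h v)" using big rl lzM LM by linarith
  define Bk where "Bk k = length (morph h (take k V))" for k
  have Bn: "Bk n = length (morph h v)" unfolding Bk_def V_def using lv by simp
  define s where "s = (LEAST k. i + p \<le> Bk k)"
  have s1: "i + p \<le> Bk s" unfolding s_def by (rule LeastI[of _ n]) (use Bn ipB in simp)
  have sn: "s \<le> n" unfolding s_def by (rule Least_le) (use Bn ipB in simp)
  have s0: "s \<noteq> 0"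
  proof
    assume "s = 0"
    then have "Bk s = 0" unfolding Bk_def by simp
    with s1 p0 show False by simp
  qed
  have sprev: "Bk (s - 1) < i + p"
  proof -
    have "\<not> i + p \<le> Bk (s - 1)" unfolding s_def
      by (rule not_less_Least) (use s0 in \<open>simp add: s_def[symmetric]\<close>)
    then show ?thesis by simp
  qed
  have Bs: "Bk s \<le> Bk (s - 1) + M"
  proof -
    have "s - 1 < length V" using sn lV by simp
    then have "morph h (take (Suc (s - 1)) V) = morph h (take (s - 1) V) @ h (V ! (s - 1))"
      by (rule morph_take_Suc)
    moreover have "Suc (s - 1) = s" using s0 by simp
    ultimately have "Bk s = Bk (s - 1) + length (h (V ! (s - 1)))" unfolding Bk_def by simp
    then show ?thesis using bnd by (metis add_le_cancel_left)
  qed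
  define y where "y = take s V"
  define x where "x = drop s V"
  have Vyx: "V = y @ x" unfolding x_def y_def by simp
  have ly: "length y = s" unfolding y_def using sn lV by simp
  have y_eq: "y = take s v" unfolding y_def V_def using sn lv by simp
  have yG: "y \<in> Good B s" using good_take[OF gv, of s] ly y_eq unfolding Good_def by simp
  have lx: "length x = n + 1 - s" unfolding x_def using lV by simp
  have mx: "morph h x = drop (Bk s) z" unfolding x_def z_def Bk_def by (rule morph_drop)
  have ypre: "prefix (morph h y) z" unfolding y_def z_def by (rule morph_take_prefix)
  have my: "morph h y = take (Bk s) z" using prefix_take_eq[OF ypre] unfolding Bk_def y_def by simp
  have Bsz: "Bk s \<le> length z" using prefix_length_le[OF ypre] unfolding Bk_def y_def by simp
  define l where "l = L - M"
  have bl: "Bk s + l \<le> i + p + L" using sprev Bs LM unfolding l_def by linarith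
  have pre: "prefix (ext (morph h y) p l) (morph h x)"
    unfolding my mx by (rule ext_prefix[OF r s1 Bsz bl])
  have hx_lt: "length (morph h x) < length (ext (morph h y) p l) + 2*M"
  proof -
    have "length (morph h x) = length z - Bk s" unfolding mx by simp
    then show ?thesis using lzM big s1 LM unfolding l_def by simp
  qed
  have xX: "x \<in> Xs h (ext (morph h y) p l) (2*M) (n+1-s)" unfolding Xs_def using lx pre hx_lt by simp
  define d where "d = n - s"
  have sd: "s = n - d" and dn: "d \<le> n" unfolding d_def using sn by simp_all
  have VI: "V \<in> Img B n M h (n - d) L p" unfolding Img_def using yG xX Vyx sd l_def by blast
  have Ld: "L \<le> M*(d+2)"
  proof -
    have "l \<le> length (morph h x)" using prefix_length_le[OF pre] by simp
    also have "\<dots> \<le> M * length x" by (rule length_morph_le[OF bnd])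
    also have "\<dots> = M * (d + 1)" using lx sn unfolding d_def by (simp add: Suc_diff_le)
    finally have "l \<le> M * (d + 1)" .
    then show ?thesis unfolding l_def using LM by (simp add: algebra_simps)
  qed
  have Dd: "Dsel TYPE('a) B M \<le> d"
  proof -
    have "M * (Dsel TYPE('a) B M + 2) < M * (d + 2)" using NfM Ld by linarith
    then show ?thesis by simp
  qed
  show ?thesis
    using Mn M1 hM Dd dn Ld p0 pL VI unfolding V_def by (intro bexI[of _ M] bexI[of _ h] bexI[of _ d] bexI[of _ L] bexI[of _ p]) auto
qed



definition BadS :: "'b itself \<Rightarrow> nat \<Rightarrow> 'a list set" where
  "BadS B n = {v @ [c] | v c. v \<in> Good B n \<and> \<not> good B (v @ [c])}"

lemma finite_Xs: "finite (UNIV :: 'a set) \<Longrightarrow> finite (Xs h u K t :: 'a list set)"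
  unfolding Xs_def by (rule finite_subset[OF _ finite_lists_eq[of t]]) auto

lemma Img_len: "s \<le> n \<Longrightarrow> Img B n M h s L p \<subseteq> {xs. length xs = n + 1}"
  unfolding Img_def Xs_def Good_def by auto

lemma card_Img:
  fixes B :: "'b itself" and h :: "'a \<Rightarrow> 'b list"
  assumes fa: "finite (UNIV :: 'a set)" and hM: "h \<in> HS M"
  shows "card (Img B n M h s L p) \<le> card (Good B s :: 'a list set) * ((L + 1) * Qc TYPE('a) M)"
proof -
  have inj: "inj (morph h)" and bnd: "\<forall>c. length (h c) \<le> M" using hM unfolding HS_def by auto
  have "card (Img B n M h s L p) \<le> (\<Sum>y\<in>Good B s. card ((\<lambda>x. y @ x) ` Xs h (ext (morph h y) p (L - M)) (2*M) (n+1-s)))"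
    unfolding Img_def by (rule card_UN_le[OF finite_Good[OF fa]])
  also have "\<dots> \<le> (\<Sum>y\<in>(Good B s :: 'a list set). (L + 1) * Qc TYPE('a) M)"
  proof -
    have "card ((\<lambda>x. y @ x) ` Xs h (ext (morph h y) p (L - M)) (2*M) (n+1-s)) \<le> (L + 1) * Qc TYPE('a) M" for y
    proof -
    have "card ((\<lambda>x. y @ x) ` Xs h (ext (morph h y) p (L - M)) (2*M) (n+1-s))
          \<le> card (Xs h (ext (morph h y) p (L - M)) (2*M) (n+1-s))"
      by (rule card_image_le[OF finite_Xs[OF fa]])
    also have "\<dots> \<le> (length (ext (morph h y) p (L - M)) + 1) * card {xs :: 'a list. length xs < 2*M + M}"
      unfolding Xs_def by (rule card_Xs[OF inj bnd fa])
    also have "\<dots> = (L - M + 1) * Qc TYPE('a) M" unfolding Qc_def by simp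
    also have "\<dots> \<le> (L + 1) * Qc TYPE('a) M" by simp
    finally show ?thesis .
    qed
    then show ?thesis by (intro sum_mono)
  qed
  also have "\<dots> = card (Good B s :: 'a list set) * ((L + 1) * Qc TYPE('a) M)" by simp
  finally show ?thesis .
qed

lemma sum_LP: "(\<Sum>L\<in>{..X}. \<Sum>p\<in>{1..L^2}. (L + 1) * (a::nat)) \<le> (X+1)^4 * a"
proof -
  have "(\<Sum>L\<in>{..X}. \<Sum>p\<in>{1..L^2}. (L + 1) * a) = (\<Sum>L\<in>{..X}. L^2 * ((L + 1) * a))" by simp
  also have "\<dots> \<le> (\<Sum>L\<in>{..X}. (X+1)^3 * a)"
  proof (rule sum_mono)
    fix L assume "L \<in> {..X}"
    then have "L \<le> X" by simp
    then have "L^2 * (L+1) \<le> (X+1)^2 * (X+1)" by (intro mult_mono power_mono) auto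
    also have "(X+1)^2 * (X+1) = (X+1)^3" by (simp only: numeral_3_eq_3 power_Suc2 numeral_2_eq_2)
    finally have "L^2 * (L+1) * a \<le> (X+1)^3 * a" by (rule mult_right_mono) simp
    then show "L^2 * ((L + 1) * a) \<le> (X+1)^3 * a" by (simp only: mult.assoc)
  qed
  also have "\<dots> = (X+1)^4 * a" by (simp add: eval_nat_numeral algebra_simps)
  finally show ?thesis .
qed

lemma card_BadS_nat:
  fixes B :: "'b itself"
  assumes fa: "finite (UNIV :: 'a set)" and fb: "finite (UNIV :: 'b set)"
  shows "card (BadS B n :: 'a list set) \<le> (\<Sum>M\<in>{1..n}. \<Sum>d\<in>{Dsel TYPE('a) B M..n}.
     card (HS M :: ('a\<Rightarrow>'b list) set) * ((M*(d+2)+1)^4 * (Qc TYPE('a) M * card (Good B (n-d) :: 'a list set))))"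
proof -
  define U where "U = (\<Union>M\<in>{1..n}. \<Union>h\<in>(HS M :: ('a\<Rightarrow>'b list) set). \<Union>d\<in>{Dsel TYPE('a) B M..n}.
     \<Union>L\<in>{..M*(d+2)}. \<Union>p\<in>{1..L^2}. Img B n M h (n-d) L p)"
  have sub: "BadS B n \<subseteq> U"
  proof
    fix w :: "'a list" assume "w \<in> BadS B n"
    then obtain v c where "w = v @ [c]" "v \<in> Good B n" "\<not> good B (v @ [c])" unfolding BadS_def by blast
    then obtain M h d L p where M: "M \<in> {1..n}" and h: "h \<in> HS M" and d: "d \<in> {Dsel TYPE('a) B M..n}"
      and L: "L \<in> {..M*(d+2)}" and p: "p \<in> {1..L^2}" and mem: "v @ [c] \<in> Img B n M h (n-d) L p"
      using bad_decomp[of v B n c] by metis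
    show "w \<in> U" unfolding U_def \<open>w = v @ [c]\<close>
      by (rule UN_I[OF M], rule UN_I[OF h], rule UN_I[OF d], rule UN_I[OF L], rule UN_I[OF p], rule mem)
  qed
  have "U \<subseteq> {xs. length xs = n + 1}" unfolding U_def by (intro UN_least Img_len) simp
  then have finU: "finite U" using finite_lists_eq[OF fa] finite_subset by blast
  have "card (BadS B n :: 'a list set) \<le> card U" by (rule card_mono[OF finU sub])
  also have "\<dots> \<le> (\<Sum>M\<in>{1..n}. \<Sum>h\<in>(HS M :: ('a\<Rightarrow>'b list) set). \<Sum>d\<in>{Dsel TYPE('a) B M..n}.
     \<Sum>L\<in>{..M*(d+2)}. \<Sum>p\<in>{1..L^2}. card (Img B n M h (n-d) L p))"
    unfolding U_def
    apply (rule order_trans[OF card_UN_le], simp)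
    apply (rule sum_mono)
    apply (rule order_trans[OF card_UN_le[OF finite_HS[OF fa fb]]])
    apply (rule sum_mono)
    apply (rule order_trans[OF card_UN_le], simp)
    apply (rule sum_mono)
    apply (rule order_trans[OF card_UN_le], simp)
    apply (rule sum_mono)
    apply (rule order_trans[OF card_UN_le], simp)
    apply simp
    done
  also have "\<dots> \<le> (\<Sum>M\<in>{1..n}. \<Sum>h\<in>(HS M :: ('a\<Rightarrow>'b list) set). \<Sum>d\<in>{Dsel TYPE('a) B M..n}.
     \<Sum>L\<in>{..M*(d+2)}. \<Sum>p\<in>{1..L^2}. (L + 1) * (Qc TYPE('a) M * card (Good B (n-d) :: 'a list set)))"
    apply (intro sum_mono)
    subgoal for M h d L p using card_Img[OF fa, of h M B n "n-d" L p] by (simp only: ac_simps)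
    done
  also have "\<dots> \<le> (\<Sum>M\<in>{1..n}. \<Sum>h\<in>(HS M :: ('a\<Rightarrow>'b list) set). \<Sum>d\<in>{Dsel TYPE('a) B M..n}.
     (M*(d+2)+1)^4 * (Qc TYPE('a) M * card (Good B (n-d) :: 'a list set)))"
    by (intro sum_mono sum_LP)
  also have "\<dots> = (\<Sum>M\<in>{1..n}. \<Sum>d\<in>{Dsel TYPE('a) B M..n}.
     card (HS M :: ('a\<Rightarrow>'b list) set) * ((M*(d+2)+1)^4 * (Qc TYPE('a) M * card (Good B (n-d) :: 'a list set))))"
    by (simp add: sum_distrib_left)
  finally show ?thesis .
qed



lemma card_BadS_real:
  fixes B :: "'b itself"
  assumes fa: "finite (UNIV :: 'a set)" and fb: "finite (UNIV :: 'b set)"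
    and IH: "\<forall>s\<le>n. real (card (Good B s :: 'a list set)) \<le> (2/3)^(n-s) * real (card (Good B n :: 'a list set))"
  shows "real (card (BadS B n :: 'a list set)) \<le> real (card (Good B n :: 'a list set)) / 2"
proof -
  define G where "G s = real (card (Good B s :: 'a list set))" for s
  have G0: "0 \<le> G s" for s unfolding G_def by simp
  have "real (card (BadS B n :: 'a list set)) \<le> real (\<Sum>M\<in>{1..n}. \<Sum>d\<in>{Dsel TYPE('a) B M..n}.
     card (HS M :: ('a\<Rightarrow>'b list) set) * ((M*(d+2)+1)^4 * (Qc TYPE('a) M * card (Good B (n-d) :: 'a list set))))"
    using card_BadS_nat[OF fa fb, of B n] by (simp only: of_nat_le_iff)
  also have "\<dots> = (\<Sum>M\<in>{1..n}. \<Sum>d\<in>{Dsel TYPE('a) B M..n}.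
     real (card (HS M :: ('a\<Rightarrow>'b list) set)) * (real (M*(d+2)+1)^4 * (real (Qc TYPE('a) M) * G (n-d))))"
    unfolding G_def by simp
  also have "\<dots> \<le> (\<Sum>M\<in>{1..n}. \<Sum>d\<in>{Dsel TYPE('a) B M..n}. Tm TYPE('a) B M d * G n)"
  proof (intro sum_mono)
    fix M d assume d: "d \<in> {Dsel TYPE('a) B M..n}"
    then have "G (n-d) \<le> (2/3)^d * G n" using IH unfolding G_def by (metis atLeastAtMost_iff diff_diff_cancel diff_le_self)
    then have "real (card (HS M :: ('a\<Rightarrow>'b list) set)) * (real (M*(d+2)+1)^4 * (real (Qc TYPE('a) M) * G (n-d)))
      \<le> real (card (HS M :: ('a\<Rightarrow>'b list) set)) * (real (M*(d+2)+1)^4 * (real (Qc TYPE('a) M) * ((2/3)^d * G n)))"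
      by (intro mult_left_mono) auto
    also have "\<dots> = Tm TYPE('a) B M d * G n" unfolding Tm_def by (simp only: ac_simps)
    finally show "real (card (HS M :: ('a\<Rightarrow>'b list) set)) * (real (M*(d+2)+1)^4 * (real (Qc TYPE('a) M) * G (n-d)))
      \<le> Tm TYPE('a) B M d * G n" .
  qed
  also have "\<dots> = G n * (\<Sum>M\<in>{1..n}. \<Sum>d=Dsel TYPE('a) B M..n. Tm TYPE('a) B M d)"
    by (simp add: sum_distrib_left mult.commute)
  also have "\<dots> \<le> G n * (\<Sum>M\<in>{1..n}. 1 / (4 * 2^M))"
    by (intro mult_left_mono sum_mono Dsel_prop G0)
  also have "\<dots> \<le> G n * (1/2)"
  proof (rule mult_left_mono[OF _ G0])
    have "(\<Sum>M\<in>{1..n}. 1 / (4 * 2^M) :: real) = (1/4) * (\<Sum>M=1..n. (1/2::real)^M)"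
      by (simp add: sum_distrib_left power_one_over)
    also have "\<dots> \<le> (1/4) * (1 / (1 - 1/2))" by (intro mult_left_mono geom_le) auto
    finally show "(\<Sum>M\<in>{1..n}. 1 / (4 * 2^M) :: real) \<le> 1/2" by simp
  qed
  finally show ?thesis unfolding G_def by simp
qed

lemma ratio_bound:
  fixes G :: "nat \<Rightarrow> real"
  assumes "\<forall>k<n. 3/2 * G k \<le> G (Suc k)" "\<forall>k. 0 \<le> G k" "s \<le> n"
  shows "G s \<le> (2/3)^(n-s) * G n"
  using assms
proof (induction n)
  case 0 then show ?case by simp
next
  case (Suc n)
  show ?case
  proof (cases "s = Suc n")
    case True then show ?thesis by simp
  next
    case False
    then have sn: "s \<le> n" using Suc.prems by simp
    then have "G s \<le> (2/3)^(n-s) * G n" using Suc by simp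
    also have "G n \<le> (2/3) * G (Suc n)" using Suc.prems(1) by auto
    then have "(2/3)^(n-s) * G n \<le> (2/3)^(n-s) * ((2/3) * G (Suc n))" by (intro mult_left_mono) auto
    also have "\<dots> = (2/3)^(Suc n - s) * G (Suc n)" using sn by (simp add: Suc_diff_le)
    finally show ?thesis .
  qed
qed

lemma step_card:
  fixes B :: "'b itself"
  assumes fa: "finite (UNIV :: 'a set)" and c2: "card (UNIV :: 'a set) = 2"
  shows "2 * card (Good B n :: 'a list set) \<le> card (Good B (Suc n) :: 'a list set) + card (BadS B n :: 'a list set)"
proof -
  let ?A = "(\<lambda>(v, c). v @ [c]) ` ((Good B n :: 'a list set) \<times> (UNIV :: 'a set))"
  have "inj_on (\<lambda>(v, c). v @ [c]) ((Good B n :: 'a list set) \<times> (UNIV :: 'a set))"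
    by (rule inj_onI) auto
  then have cA: "card ?A = card (Good B n :: 'a list set) * 2"
    by (simp add: card_image card_cartesian_product c2)
  have sub: "?A \<subseteq> Good B (Suc n) \<union> BadS B n"
    unfolding Good_def BadS_def by auto
  have fin: "finite (Good B (Suc n) \<union> (BadS B n :: 'a list set))"
  proof -
    have "BadS B n \<subseteq> {xs :: 'a list. length xs = Suc n}" unfolding BadS_def Good_def by auto
    then show ?thesis using finite_Good[OF fa] finite_lists_eq[OF fa] finite_subset by blast
  qed
  have "card ?A \<le> card (Good B (Suc n) \<union> (BadS B n :: 'a list set))" by (rule card_mono[OF fin sub])
  also have "\<dots> \<le> card (Good B (Suc n) :: 'a list set) + card (BadS B n :: 'a list set)" by (rule card_Un_le)
  finally show ?thesis using cA by simp
qed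

lemma growth:
  fixes B :: "'b itself"
  assumes fa: "finite (UNIV :: 'a set)" and fb: "finite (UNIV :: 'b set)" and c2: "card (UNIV :: 'a set) = 2"
  shows "\<forall>k<n. 3/2 * real (card (Good B k :: 'a list set)) \<le> real (card (Good B (Suc k) :: 'a list set))"
proof (induction n)
  case 0 then show ?case by simp
next
  case (Suc n)
  define G where "G s = real (card (Good B s :: 'a list set))" for s
  have IH: "\<forall>s\<le>n. G s \<le> (2/3)^(n-s) * G n"
    using ratio_bound[of n G] Suc.IH unfolding G_def by simp
  have "G n / 2 \<ge> real (card (BadS B n :: 'a list set))"
    using card_BadS_real[OF fa fb, of n B] IH unfolding G_def by simp
  moreover have "2 * G n \<le> G (Suc n) + real (card (BadS B n :: 'a list set))"
    using step_card[OF fa c2, of B n] unfolding G_def by (simp only: of_nat_add of_nat_mult of_nat_le_iff)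
  ultimately have "3/2 * G n \<le> G (Suc n)" by simp
  then show ?case using Suc.IH unfolding G_def by (simp add: less_Suc_eq)
qed

lemma Good_nonempty:
  fixes B :: "'b itself"
  assumes fa: "finite (UNIV :: 'a set)" and fb: "finite (UNIV :: 'b set)" and c2: "card (UNIV :: 'a set) = 2"
  shows "Good B n \<noteq> ({} :: 'a list set)"
proof -
  define G where "G s = real (card (Good B s :: 'a list set))" for s
  have "G 0 = 1"
  proof -
    have "Good B 0 = ({[]} :: 'a list set)" unfolding Good_def using good_Nil by auto
    then show ?thesis unfolding G_def by simp
  qed
  have "(3/2)^k \<le> G k" for k
  proof (induction k)
    case 0 then show ?case using \<open>G 0 = 1\<close> by simp
  next
    case (Suc k)
    have "3/2 * G k \<le> G (Suc k)" using growth[OF fa fb c2, of "Suc k" B] unfolding G_def by simp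
    then show ?case using Suc.IH by simp
  qed
  then have "0 < G n" by (rule less_le_trans[rotated]) simp
  then show ?thesis unfolding G_def by auto
qed



definition extendable :: "'b itself \<Rightarrow> 'a list \<Rightarrow> bool" where
  "extendable B v \<longleftrightarrow> (\<forall>m. \<exists>u. length u = m \<and> good B (v @ u))"

lemma extendable_Nil:
  fixes B :: "'b itself"
  assumes fa: "finite (UNIV :: 'a set)" and fb: "finite (UNIV :: 'b set)" and c2: "card (UNIV :: 'a set) = 2"
  shows "extendable B ([] :: 'a list)"
  unfolding extendable_def
proof
  fix m
  obtain u :: "'a list" where "u \<in> Good B m" using Good_nonempty[OF fa fb c2, of B m] by blast
  then show "\<exists>u :: 'a list. length u = m \<and> good B ([] @ u)" unfolding Good_def by auto
qed

lemma extendable_step: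
  fixes B :: "'b itself" and v :: "'a list"
  assumes fa: "finite (UNIV :: 'a set)" and e: "extendable B v"
  shows "\<exists>c. extendable B (v @ [c])"
proof (rule ccontr)
  assume "\<not> (\<exists>c. extendable B (v @ [c]))"
  then have "\<forall>c. \<exists>m. \<forall>u. length u = m \<longrightarrow> \<not> good B (v @ [c] @ u)"
    unfolding extendable_def by auto
  then obtain f where f: "\<And>c u. length u = f c \<Longrightarrow> \<not> good B (v @ [c] @ u)" by metis
  define m where "m = Suc (Max (range f))"
  obtain u where u: "length u = m" "good B (v @ u)" using e unfolding extendable_def by blast
  then obtain c u' where cu: "u = c # u'" unfolding m_def by (cases u) auto
  have "f c \<le> Max (range f)" using fa by simp
  then have "f c \<le> length u'" using u cu unfolding m_def by simp
  then have "length (take (f c) u') = f c" by simp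
  moreover have "good B (v @ [c] @ take (f c) u')"
  proof -
    have "v @ u = (v @ [c] @ take (f c) u') @ drop (f c) u'" using cu by simp
    then show ?thesis using u(2) good_prefix by metis
  qed
  ultimately show False using f by blast
qed

fun seq :: "'b itself \<Rightarrow> nat \<Rightarrow> 'a list" where
  "seq B 0 = []"
| "seq B (Suc k) = seq B k @ [SOME c. extendable B (seq B k @ [c])]"

lemma seq_ext:
  fixes B :: "'b itself"
  assumes fa: "finite (UNIV :: 'a set)" and fb: "finite (UNIV :: 'b set)" and c2: "card (UNIV :: 'a set) = 2"
  shows "extendable B (seq B k :: 'a list)"
proof (induction k)
  case 0 then show ?case using extendable_Nil[OF fa fb c2] by simp
next
  case (Suc k)
  have "\<exists>c::'a. extendable B (seq B k @ [c])" using extendable_step[OF fa Suc.IH] .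
  then have "extendable B (seq B k @ [SOME c::'a. extendable B (seq B k @ [c])])" by (rule someI_ex)
  then show ?case by simp
qed

lemma seq_len: "length (seq B k) = k" by (induction k) auto

lemma seq_map: "map (\<lambda>i. seq B (Suc i) ! i) [0..<n] = seq B n"
proof (induction n)
  case (Suc n)
  have "seq B (Suc n) ! n = (SOME c. extendable B (seq B n @ [c]))"
    by (simp only: seq.simps) (metis nth_append_length seq_len)
  then show ?case using Suc by simp
qed simp

lemma exists_good_word:
  assumes fa: "finite (UNIV :: 'a set)" and fb: "finite (UNIV :: 'b set)" and c2: "card (UNIV :: 'a set) = 2"
  shows "\<exists>w :: nat \<Rightarrow> 'a. \<forall>n. good TYPE('b) (map w [0..<n])"
proof -
  define w :: "nat \<Rightarrow> 'a" where "w i = seq TYPE('b) (Suc i) ! i" for i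
  have "good TYPE('b) (map w [0..<n])" for n
  proof -
    have "extendable TYPE('b) (seq TYPE('b) n :: 'a list)" by (rule seq_ext[OF fa fb c2])
    then have "good TYPE('b) (seq TYPE('b) n :: 'a list)" unfolding extendable_def by (metis append_Nil2 length_0_conv)
    then show ?thesis unfolding w_def using seq_map by metis
  qed
  then show ?thesis by blast
qed

lemma morph_inf_eq:
  assumes ne: "\<forall>c. h c \<noteq> []" and k: "k < length (morph h (map w [0..<n]))"
  shows "morph_inf h w k = morph h (map w [0..<n]) ! k"
proof -
  define m where "m = max n (Suc k)"
  have a: "morph h (map w [0..<m]) = morph h (map w [0..<n]) @ morph h (map w [n..<m])"
    using upt_add_eq_append[of 0 n "m - n"] unfolding m_def by simp
  have b: "morph h (map w [0..<m]) = morph h (map w [0..<Suc k]) @ morph h (map w [Suc k..<m])"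
    using upt_add_eq_append[of 0 "Suc k" "m - Suc k"] unfolding m_def by simp
  have "Suc k \<le> length (morph h (map w [0..<Suc k]))"
    using length_morph_ge[OF ne, of "map w [0..<Suc k]"] by simp
  then have kl: "k < length (morph h (map w [0..<Suc k]))" by simp
  have "morph h (map w [0..<Suc k]) ! k = morph h (map w [0..<m]) ! k"
    unfolding b by (rule nth_append_left[OF kl, symmetric])
  also have "\<dots> = morph h (map w [0..<n]) ! k" unfolding a by (rule nth_append_left[OF k])
  finally show ?thesis unfolding morph_inf_def by simp
qed

lemma good_word_property:
  fixes w :: "nat \<Rightarrow> 'a" and h :: "'a \<Rightarrow> 'b list"
  assumes fa: "finite (UNIV :: 'a set)" and g: "\<forall>n. good TYPE('b) (map w [0..<n])" and inj: "inj (morph h)"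
  shows "\<exists>N. \<forall>i p L. N \<le> L \<longrightarrow> 0 < p \<longrightarrow> p \<le> L^2 \<longrightarrow> \<not> (\<forall>j<L. morph_inf h w (i+j) = morph_inf h w (i+p+j))"
proof -
  define M where "M = (\<Sum>c\<in>UNIV. length (h c))"
  have hM: "h \<in> HS M" unfolding HS_def M_def using inj fa by (auto intro: member_le_sum)
  have ne: "\<forall>c. h c \<noteq> []" using inj_morph_nonempty[OF inj] by blast
  show ?thesis
  proof (intro exI allI impI notI)
    fix i p L assume NL: "Nf TYPE('a) TYPE('b) M \<le> L" and p0: "0 < p" and pL: "p \<le> L^2"
      and eq: "\<forall>j<L. morph_inf h w (i+j) = morph_inf h w (i+p+j)"
    define n where "n = i + p + L"
    define zn where "zn = morph h (map w [0..<n])"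
    have ln: "n \<le> length zn" unfolding zn_def using length_morph_ge[OF ne, of "map w [0..<n]"] by simp
    have "rep zn i p L" unfolding rep_def
    proof (intro conjI allI impI)
      show "0 < p" by (rule p0)
      show "i + p + L \<le> length zn" using ln unfolding n_def by simp
    next
      fix j assume j: "j < L"
      have "zn ! (i+j) = morph_inf h w (i+j)" using morph_inf_eq[OF ne, of "i+j" w n] ln j unfolding zn_def n_def by simp
      moreover have "zn ! (i+p+j) = morph_inf h w (i+p+j)" using morph_inf_eq[OF ne, of "i+p+j" w n] ln j unfolding zn_def n_def by simp
      ultimately show "zn ! (i+j) = zn ! (i+p+j)" using eq j by simp
    qed
    moreover have "good TYPE('b) (map w [0..<n])" using g by blast
    ultimately show False using hM NL pL unfolding good_def zn_def by blast
  qed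
qed



theorem corollary31:
  assumes "card (UNIV :: 'a set) = 2"
    and "finite (UNIV :: 'b set)" and "card (UNIV :: 'b set) \<ge> 2"
  shows "\<exists>w :: nat \<Rightarrow> 'a. ACE_inj TYPE('b) w = 1"
proof -
  have fa: "finite (UNIV :: 'a set)" using assms(1) by (simp add: card_ge_0_finite)
  obtain w :: "nat \<Rightarrow> 'a" where g: "\<forall>n. good TYPE('b) (map w [0..<n])"
    using exists_good_word[OF fa assms(2) assms(1)] by blast
  have "ACE_inj TYPE('b) w = 1"
    unfolding ACE_inj_def
  proof (rule SUP_eq_const)
    obtain f :: "'a \<Rightarrow> 'b" where f: "inj_on f UNIV"
      using card_le_inj[OF fa assms(2)] assms(1) assms(3) by auto
    define h :: "'a \<Rightarrow> 'b list" where "h c = [f c]" for c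
    have "morph h = map f" unfolding morph_def h_def by (simp add: fun_eq_iff)
    then have "inj (morph h)" using f by (simp add: inj_mapI)
    then show "{h :: 'a \<Rightarrow> 'b list. inj (morph h)} \<noteq> {}" by blast
  next
    fix h :: "'a \<Rightarrow> 'b list" assume "h \<in> {h. inj (morph h)}"
    then have inj: "inj (morph h)" by simp
    obtain N where "\<forall>i p L. N \<le> L \<longrightarrow> 0 < p \<longrightarrow> p \<le> L^2 \<longrightarrow> \<not> (\<forall>j<L. morph_inf h w (i+j) = morph_inf h w (i+p+j))"
      using good_word_property[OF fa g inj] by blast
    then have "ACE (morph_inf h w) \<le> 1" by (rule ACE_le1)
    moreover have "1 \<le> ACE (morph_inf h w)" by (rule ACE_ge1)
    ultimately show "ACE (morph_inf h w) = 1" by simp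
  qed
  then show ?thesis by blast
qed


end
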